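(* There exists a system of $78$ distinct lines through the origin in $\mathbb{R}^{11}$ whose angle set is $\{\tfrac13,\tfrac{1}{\sqrt{11}},\tfrac{1}{11},0\}$; in particular its coherence is $\tfrac13$.
   Context: For a line system $(l_j)_{j\in S}$ with unit vectors $\phi_j$ spanning $l_j$, the angle set is $\{|\langle\phi_i,\phi_j\rangle| : i\neq j\}$ and the coherence is the maximum of the angle set. *)

theory Defs
  imports "HOL-Analysis.Analysis"
begin

text \<open>A line system is given by a family of unit vectors phi indexed by S;
  line j is span of phi j.  Angle set and coherence as in the paper.\<close>

definition angle_set :: "('i \<Rightarrow> 'a::real_inner) \<Rightarrow> 'i set \<Rightarrow> real set" where
  "angle_set phi S = {\<bar>phi i \<bullet> phi j\<bar> | i j. i \<in> S \<and> j \<in> S \<and> i \<noteq> j}"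

definition coherence :: "('i \<Rightarrow> 'a::real_inner) \<Rightarrow> 'i set \<Rightarrow> real" where
  "coherence phi S = Sup (angle_set phi S)"

end

theory Submission
  imports Defs
begin

definition WL :: "int list list" where
  "WL = [[1, 0, 0, 0, 0, 0, 0, 0, 0, 0, 0],
  [0, 1, 0, 0, 0, 0, 0, 0, 0, 0, 0],
  [0, 0, 1, 0, 0, 0, 0, 0, 0, 0, 0],
  [0, 0, 0, 1, 0, 0, 0, 0, 0, 0, 0],
  [0, 0, 0, 0, 1, 0, 0, 0, 0, 0, 0],
  [0, 0, 0, 0, 0, 1, 0, 0, 0, 0, 0],
  [0, 0, 0, 0, 0, 0, 1, 0, 0, 0, 0],
  [0, 0, 0, 0, 0, 0, 0, 1, 0, 0, 0],
  [0, 0, 0, 0, 0, 0, 0, 0, 1, 0, 0],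
  [0, 0, 0, 0, 0, 0, 0, 0, 0, 1, 0],
  [0, 0, 0, 0, 0, 0, 0, 0, 0, 0, 1],
  [-1, 1, -1, 1, 1, 1, -1, -1, -1, 1, -1],
  [-1, -1, 1, -1, 1, 1, 1, -1, -1, -1, 1],
  [1, -1, -1, 1, -1, 1, 1, 1, -1, -1, -1],
  [-1, 1, -1, -1, 1, -1, 1, 1, 1, -1, -1],
  [-1, -1, 1, -1, -1, 1, -1, 1, 1, 1, -1],
  [-1, -1, -1, 1, -1, -1, 1, -1, 1, 1, 1],
  [1, -1, -1, -1, 1, -1, -1, 1, -1, 1, 1],
  [1, 1, -1, -1, -1, 1, -1, -1, 1, -1, 1],
  [1, 1, 1, -1, -1, -1, 1, -1, -1, 1, -1],
  [-1, 1, 1, 1, -1, -1, -1, 1, -1, -1, 1],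
  [1, -1, 1, 1, 1, -1, -1, -1, 1, -1, -1],
  [1, 1, 1, 1, 1, 1, 1, 1, 1, 1, 1],
  [0, 0, 1, -1, -1, 1, 1, -1, 1, 1, 1],
  [0, 1, 0, 1, 1, -1, 1, -1, 1, 1, -1],
  [0, 1, -1, 0, -1, -1, -1, -1, -1, 1, 1],
  [0, 1, -1, -1, 0, 1, 1, -1, -1, -1, -1],
  [0, 1, -1, 1, -1, 0, 1, 1, 1, -1, 1],
  [0, 1, 1, 1, -1, 1, 0, 1, -1, 1, -1],
  [0, 1, 1, -1, -1, -1, -1, 0, 1, -1, -1],
  [0, 1, 1, 1, 1, 1, -1, -1, 0, -1, 1],
  [0, 1, 1, -1, 1, -1, 1, 1, -1, 0, 1],
  [0, 1, -1, -1, 1, 1, -1, 1, 1, 1, 0],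
  [1, 0, 0, 1, -1, -1, 1, 1, -1, 1, 1],
  [1, 0, -1, 0, -1, -1, 1, -1, 1, -1, -1],
  [1, 0, 1, -1, 0, -1, -1, -1, -1, -1, 1],
  [1, 0, -1, 1, 1, 0, -1, -1, 1, 1, 1],
  [1, 0, 1, -1, 1, -1, 0, 1, 1, 1, -1],
  [1, 0, -1, -1, -1, 1, -1, 0, -1, 1, -1],
  [1, 0, -1, -1, 1, 1, 1, 1, 0, -1, 1],
  [1, 0, 1, 1, 1, 1, 1, -1, -1, 0, -1],
  [1, 0, 1, 1, -1, 1, -1, 1, 1, -1, 0],
  [1, 1, 0, 0, 1, -1, -1, 1, 1, -1, 1],
  [1, -1, 0, 1, 0, 1, 1, -1, 1, -1, 1],
  [1, 1, 0, 1, -1, 0, -1, -1, -1, -1, -1],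
  [1, 1, 0, -1, 1, 1, 0, -1, -1, 1, 1],
  [1, -1, 0, -1, 1, -1, 1, 0, -1, -1, -1],
  [1, -1, 0, 1, 1, 1, -1, 1, 0, 1, -1],
  [1, 1, 0, -1, -1, 1, 1, 1, 1, 0, -1],
  [1, -1, 0, -1, -1, -1, -1, -1, 1, 1, 0],
  [1, 1, 1, 0, 0, 1, -1, -1, 1, 1, -1],
  [1, 1, -1, 0, 1, 0, 1, 1, -1, 1, -1],
  [1, -1, -1, 0, -1, 1, 0, 1, 1, 1, 1],
  [1, 1, 1, 0, -1, 1, 1, 0, -1, -1, 1],
  [1, -1, 1, 0, 1, -1, 1, -1, 0, 1, 1],
  [1, -1, 1, 0, -1, -1, -1, 1, -1, 0, -1],
  [1, -1, -1, 0, 1, 1, -1, -1, -1, -1, 0],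
  [1, -1, -1, -1, 0, 0, -1, 1, 1, -1, -1],
  [1, -1, -1, 1, 0, -1, 0, -1, -1, 1, -1],
  [1, 1, -1, -1, 0, -1, 1, 0, 1, 1, 1],
  [1, 1, 1, 1, 0, -1, 1, 1, 0, -1, -1],
  [1, 1, -1, 1, 0, 1, -1, 1, -1, 0, 1],
  [1, -1, 1, -1, 0, 1, 1, 1, -1, 1, 0],
  [1, -1, 1, 1, 1, 0, 0, 1, -1, -1, 1],
  [1, -1, 1, 1, -1, 0, 1, 0, 1, 1, -1],
  [1, 1, 1, -1, -1, 0, -1, 1, 0, 1, 1],
  [1, -1, -1, -1, -1, 0, 1, -1, -1, 0, 1],
  [1, 1, 1, -1, 1, 0, 1, -1, 1, -1, 0],
  [1, 1, -1, 1, 1, 1, 0, 0, 1, -1, -1],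
  [1, -1, 1, -1, -1, 1, 0, -1, 0, -1, -1],
  [1, 1, 1, 1, -1, -1, 0, -1, 1, 0, 1],
  [1, 1, -1, -1, -1, -1, 0, 1, -1, -1, 0],
  [1, -1, -1, 1, -1, -1, -1, 0, 0, -1, 1],
  [1, -1, 1, -1, 1, 1, -1, 0, 1, 0, 1],
  [1, 1, 1, 1, 1, -1, -1, 0, -1, 1, 0],
  [1, 1, -1, -1, 1, -1, -1, -1, 0, 0, -1],
  [1, 1, -1, 1, -1, 1, 1, -1, 0, 1, 0],
  [1, -1, -1, 1, 1, -1, 1, 1, 1, 0, 0]]"

definition dotl :: "int list \<Rightarrow> int list \<Rightarrow> int" where
  "dotl xs ys = sum_list (map2 (*) xs ys)"

definition okp :: "int \<Rightarrow> int \<Rightarrow> bool" where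
  "okp a m \<longleftrightarrow> a = 0 \<or> 9*a*a = m \<or> 11*a*a = m \<or> 121*a*a = m"

fun chk :: "int list list \<Rightarrow> bool" where
  "chk [] = True"
| "chk (x # xs) = (list_all (\<lambda>y. okp (dotl x y) (dotl x x * dotl y y)) xs \<and> chk xs)"

definition goodv :: "int list \<Rightarrow> bool" where
  "goodv x \<longleftrightarrow> length x = 11 \<and> dotl x x \<in> {1, 9, 11}"

lemma len_WL: "length WL = 78"
  by (simp add: WL_def)

lemma chk_WL: "chk WL"
  by (code_simp)

lemma good_WL: "list_all goodv WL"
  by (code_simp)


lemma chk_nth:
  assumes "chk xs" "i < j" "j < length xs"
  shows "okp (dotl (xs!i) (xs!j)) (dotl (xs!i) (xs!i) * dotl (xs!j) (xs!j))"
  using assms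
proof (induction xs arbitrary: i j)
  case Nil
  then show ?case by simp
next
  case (Cons x xs)
  obtain j' where j': "j = Suc j'" using Cons.prems(2) by (cases j) auto
  show ?case
  proof (cases i)
    case 0
    with Cons.prems j' show ?thesis by (auto simp: list_all_length)
  next
    case (Suc i')
    with Cons.prems Cons.IH[of i' j'] j' show ?thesis by auto
  qed
qed

definition vec_of :: "int list \<Rightarrow> real ^ 11" where
  "vec_of xs = (\<chi> k. real_of_int (xs ! nat (Rep_bit1 k)))"

lemma sum11: "(\<Sum>k\<in>(UNIV::11 set). g (nat (Rep_bit1 k))) = (\<Sum>i<11. g i)"
proof -
  have r: "range (Rep_bit1 :: 11 \<Rightarrow> int) = {0..<11}"
    proof -
    have "type_definition (Rep_bit1::11\<Rightarrow>int) Abs_bit1 {0..<1+2*int CARD(5)}"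
      by (rule type_definition_bit1)
    from type_definition.Rep_range[OF this] show ?thesis by simp
  qed
  have inj: "inj (\<lambda>k::11. nat (Rep_bit1 k))"
  proof (rule injI)
    fix x y :: 11
    assume "nat (Rep_bit1 x) = nat (Rep_bit1 y)"
    moreover have "Rep_bit1 x \<in> {0..<11}" "Rep_bit1 y \<in> {0..<11}" using r by auto
    ultimately have "Rep_bit1 x = Rep_bit1 y" by (auto simp: eq_nat_nat_iff)
    then show "x = y" by (simp add: Rep_bit1_inject)
  qed
  have img: "(\<lambda>k::11. nat (Rep_bit1 k)) ` UNIV = {..<11}"
  proof -
    have "(\<lambda>k::11. nat (Rep_bit1 k)) ` UNIV = nat ` range (Rep_bit1 :: 11 \<Rightarrow> int)"
      by (simp add: image_image)
    also have "\<dots> = nat ` {0..<11}" using r by simp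
    also have "\<dots> = {..<11}"
    proof
      show "nat ` {0..<11} \<subseteq> {..<11::nat}" by auto
      show "{..<11::nat} \<subseteq> nat ` {0..<11}"
      proof
        fix n :: nat assume "n \<in> {..<11}"
        then have "int n \<in> {0..<11}" by auto
        then show "n \<in> nat ` {0..<11}" by (metis image_eqI nat_int)
      qed
    qed
    finally show ?thesis .
  qed
  have "bij_betw (\<lambda>k::11. nat (Rep_bit1 k)) UNIV {..<11}"
    using inj img by (simp add: bij_betw_def)
  then show ?thesis by (rule sum.reindex_bij_betw)
qed

lemma dotl_sum:
  assumes "length xs = 11" "length ys = 11"
  shows "dotl xs ys = (\<Sum>i<11. xs!i * ys!i)"
  using assms by (simp add: dotl_def sum_list_sum_nth atLeast0LessThan)

lemma inner_vec_of:
  assumes "length xs = 11" "length ys = 11"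
  shows "vec_of xs \<bullet> vec_of ys = real_of_int (dotl xs ys)"
proof -
  have "vec_of xs \<bullet> vec_of ys = (\<Sum>k\<in>(UNIV::11 set). real_of_int (xs ! nat (Rep_bit1 k)) * real_of_int (ys ! nat (Rep_bit1 k)))"
    by (simp add: inner_vec_def vec_of_def)
  also have "\<dots> = (\<Sum>i<11. real_of_int (xs ! i) * real_of_int (ys ! i))"
    by (rule sum11)
  also have "\<dots> = real_of_int (dotl xs ys)"
    using assms by (simp add: dotl_sum)
  finally show ?thesis .
qed

definition phi :: "nat \<Rightarrow> real ^ 11" where
  "phi i = (1 / sqrt (real_of_int (dotl (WL!i) (WL!i)))) *\<^sub>R vec_of (WL!i)"

lemma goodv_i: "i < 78 \<Longrightarrow> goodv (WL!i)"
  using good_WL len_WL by (simp add: list_all_length)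

lemma phi_inner:
  assumes "i < 78" "j < 78"
  shows "phi i \<bullet> phi j = real_of_int (dotl (WL!i) (WL!j)) /
     (sqrt (real_of_int (dotl (WL!i) (WL!i))) * sqrt (real_of_int (dotl (WL!j) (WL!j))))"
  using goodv_i[OF assms(1)] goodv_i[OF assms(2)]
  by (simp add: phi_def inner_vec_of goodv_def)

lemma phi_norm: "i < 78 \<Longrightarrow> norm (phi i) = 1"
proof -
  assume i: "i < 78"
  let ?n = "real_of_int (dotl (WL!i) (WL!i))"
  have pos: "?n > 0" using goodv_i[OF i] by (auto simp: goodv_def)
  have "phi i \<bullet> phi i = ?n / (sqrt ?n * sqrt ?n)" using phi_inner[OF i i] by simp
  also have "\<dots> = 1" using pos by simp
  finally show ?thesis by (simp add: norm_eq_sqrt_inner)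
qed

lemma val_lemma:
  fixes a m :: int
  assumes "okp a m" "m > 0"
  shows "\<bar>real_of_int a\<bar> / sqrt (real_of_int m) \<in> {1/3, 1 / sqrt 11, 1/11, 0}"
proof -
  have gen: "\<bar>real_of_int a\<bar> / sqrt (real_of_int m) = 1 / sqrt c"
    if "c * a * a = m" "c > 0" for c :: int
  proof -
    have a0: "a \<noteq> 0" using that assms(2) by auto
    have "real_of_int m = real_of_int c * (real_of_int a)^2"
      using that(1) by (simp add: power2_eq_square flip: of_int_mult)
    then have "sqrt (real_of_int m) = sqrt (real_of_int c) * \<bar>real_of_int a\<bar>"
      by (simp add: real_sqrt_mult)
    then show ?thesis using a0 by simp
  qed
  from assms(1) show ?thesis
    unfolding okp_def
  proof (elim disjE)
    assume "a = 0" then show ?thesis by simp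
  next
    assume "9*a*a = m" then show ?thesis using gen[of 9] by simp
  next
    assume "11*a*a = m" then show ?thesis using gen[of 11] by simp
  next
    assume "121*a*a = m" then show ?thesis using gen[of 121] by simp
  qed
qed

lemma pair_val:
  assumes "i < 78" "j < 78" "i \<noteq> j"
  shows "\<bar>phi i \<bullet> phi j\<bar> \<in> {1/3, 1 / sqrt 11, 1/11, 0}"
proof -
  have lt: "\<bar>phi i \<bullet> phi j\<bar> \<in> {1/3, 1 / sqrt 11, 1/11, 0}" if "i < j" "j < 78" for i j
  proof -
    have i: "i < 78" using that by simp
    let ?a = "dotl (WL!i) (WL!j)"
    let ?m = "dotl (WL!i) (WL!i) * dotl (WL!j) (WL!j)"
    have ok: "okp ?a ?m" using chk_nth[OF chk_WL that(1)] that(2) len_WL by simp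
    have p1: "dotl (WL!i) (WL!i) > 0" using goodv_i[OF i] by (auto simp: goodv_def)
    have p2: "dotl (WL!j) (WL!j) > 0" using goodv_i[OF that(2)] by (auto simp: goodv_def)
    have "\<bar>phi i \<bullet> phi j\<bar> = \<bar>real_of_int ?a\<bar> / sqrt (real_of_int ?m)"
      using phi_inner[OF i that(2)] p1 p2 by (simp add: real_sqrt_mult abs_div)
    then show ?thesis using val_lemma[OF ok] p1 p2 by simp
  qed
  show ?thesis
  proof (cases "i < j")
    case True then show ?thesis using lt assms by blast
  next
    case False
    then have "j < i" using assms by simp
    then show ?thesis using lt[of j i] assms by (simp add: inner_commute)
  qed
qed

lemma wit:
  "dotl (WL!0) (WL!1) = 0" "dotl (WL!0) (WL!11) = -1" "dotl (WL!11) (WL!12) = -1"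
  "dotl (WL!0) (WL!33) = 1"
  "dotl (WL!0) (WL!0) = 1" "dotl (WL!11) (WL!11) = 11" "dotl (WL!12) (WL!12) = 11"
  "dotl (WL!33) (WL!33) = 9" "dotl (WL!1) (WL!1) = 1"
  by (code_simp; fail)+

theorem mainTheorem9:
  shows "\<exists>phi :: nat \<Rightarrow> real ^ 11.
           (\<forall>i<78. norm (phi i) = 1) \<and>
           inj_on (\<lambda>i. span {phi i}) {..<78} \<and>
           angle_set phi {..<78} = {1/3, 1 / sqrt 11, 1/11, 0} \<and>
           coherence phi {..<78} = 1/3"
proof (intro exI[of _ phi] conjI allI impI)
  show "norm (phi i) = 1" if "i < 78" for i using phi_norm that .
  have s3: "1 / sqrt 11 \<le> (1/3::real)"
  proof -
    have "3 \<le> sqrt (11::real)" by (simp add: real_le_rsqrt)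
    then show ?thesis by (simp add: divide_simps)
  qed
  have s1: "1 / sqrt 11 < (1::real)" by simp
  show "inj_on (\<lambda>i. span {phi i}) {..<78}"
  proof (rule inj_onI)
    fix i j assume i: "i \<in> {..<78}" and j: "j \<in> {..<78}" and e: "span {phi i} = span {phi j}"
    show "i = j"
    proof (rule ccontr)
      assume ne: "i \<noteq> j"
      have "phi j \<in> span {phi i}" using e by (simp add: span_base)
      then obtain c where c: "phi j = c *\<^sub>R phi i" by (auto simp: span_singleton)
      have ni: "norm (phi i) = 1" "norm (phi j) = 1" using i j phi_norm by auto
      then have "\<bar>c\<bar> = 1" using c by simp
      moreover have "phi i \<bullet> phi i = 1" using ni by (simp flip: power2_norm_eq_inner)
      ultimately have "\<bar>phi i \<bullet> phi j\<bar> = 1" using c by simp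
      moreover have "\<bar>phi i \<bullet> phi j\<bar> \<in> {1/3, 1 / sqrt 11, 1/11, 0}"
        using pair_val i j ne by auto
      ultimately show False using s1 by auto
    qed
  qed
  have AS: "angle_set phi {..<78} = {1/3, 1 / sqrt 11, 1/11, 0}"
  proof
    show "angle_set phi {..<78} \<subseteq> {1/3, 1 / sqrt 11, 1/11, 0}"
    proof
      fix x assume "x \<in> angle_set phi {..<78}"
      then obtain i j where "x = \<bar>phi i \<bullet> phi j\<bar>" "i < 78" "j < 78" "i \<noteq> j"
        unfolding angle_set_def by auto
      then show "x \<in> {1/3, 1 / sqrt 11, 1/11, 0}" using pair_val by presburger
    qed
  next
    have v: "\<bar>phi 0 \<bullet> phi 1\<bar> = 0" "\<bar>phi 0 \<bullet> phi 11\<bar> = 1 / sqrt 11"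
      "\<bar>phi 11 \<bullet> phi 12\<bar> = 1/11" "\<bar>phi 0 \<bullet> phi 33\<bar> = 1/3"
      by (simp_all add: phi_inner wit wit[simplified] real_sqrt_mult_self)
    have m: "\<bar>phi i \<bullet> phi j\<bar> \<in> angle_set phi {..<78}"
      if "i < 78" "j < 78" "i \<noteq> j" for i j
      unfolding angle_set_def using that by blast
    have "0 \<in> angle_set phi {..<78}" using m[of 0 1] v(1) by simp
    moreover have "1 / sqrt 11 \<in> angle_set phi {..<78}" using m[of 0 11] v(2) by simp
    moreover have "1/11 \<in> angle_set phi {..<78}" using m[of 11 12] v(3) by simp
    moreover have "1/3 \<in> angle_set phi {..<78}" using m[of 0 33] v(4) by simp
    ultimately show "{1/3, 1 / sqrt 11, 1/11, 0} \<subseteq> angle_set phi {..<78}" by simp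
  qed
  then show "angle_set phi {..<78} = {1/3, 1 / sqrt 11, 1/11, 0}" .
  show "coherence phi {..<78} = 1/3"
    unfolding coherence_def AS
    by (rule cSup_eq_maximum) (use s3 in auto)
qed

end
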